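(* Any set of reflections of $G_6$ containing at least one element of $R'=R_1\cup R_1^{-1}$ and at least one element of $S$ generates the entire group $G_6$.
   Context: Let $G_7$ be the subgroup of $GL_2(\mathbb{C})$ generated by $s=\begin{bmatrix}1&0\\0&-1\end{bmatrix}$, $t=\frac14\begin{bmatrix}(1+\sqrt3)+(-1+\sqrt3)i & (1+\sqrt3)+(-1+\sqrt3)i\\ (-1+\sqrt3)-(1+\sqrt3)i & (1-\sqrt3)+(1+\sqrt3)i\end{bmatrix}$ and $u=t^{\top}$ (presentation $\langle s,t,u\mid s^2=t^3=u^3=1,\ stu=ust=tus\rangle$, order $144$). A reflection is a linear map of $\mathbb{C}^2$ whose fixed space has dimension $1$. Let $S$ be the $G_7$-conjugacy class of $s$ (six reflections of order $2$), $R_1$ the $G_7$-conjugacy class of $t$ (four reflections of order $3$), and $R_1^{-1}=\{r^{-1}:r\in R_1\}$. Let $G_6=\langle s,t\rangle$, of order $48$; its fourteen reflections are the elements of $R_1\cup R_1^{-1}\cup S$, and $R_1$, $R_1^{-1}$, $S$ are its reflection conjugacy classes. *)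

theory Defs
  imports "HOL-Analysis.Analysis"
begin

type_synonym cmat = "complex^2^2"

definition mat2 :: "complex \<Rightarrow> complex \<Rightarrow> complex \<Rightarrow> complex \<Rightarrow> cmat" where
  "mat2 a b c d = vector [vector [a, b], vector [c, d]]"

definition r3 :: complex where "r3 = complex_of_real (sqrt 3)"

definition s_mat :: cmat where "s_mat = mat2 1 0 0 (-1)"

definition t_mat :: cmat where
  "t_mat = mat2 (((1 + r3) + (-1 + r3) * \<i>) / 4) (((1 + r3) + (-1 + r3) * \<i>) / 4)
                (((-1 + r3) - (1 + r3) * \<i>) / 4) (((1 - r3) + (1 + r3) * \<i>) / 4)"

definition u_mat :: cmat where "u_mat = transpose t_mat"

inductive_set gen_group :: "cmat set \<Rightarrow> cmat set" for X :: "cmat set" where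
  gen_one: "mat 1 \<in> gen_group X"
| gen_base: "x \<in> X \<Longrightarrow> x \<in> gen_group X"
| gen_mult: "a \<in> gen_group X \<Longrightarrow> b \<in> gen_group X \<Longrightarrow> a ** b \<in> gen_group X"
| gen_inv: "a \<in> gen_group X \<Longrightarrow> matrix_inv a \<in> gen_group X"

definition G7 :: "cmat set" where "G7 = gen_group {s_mat, t_mat, u_mat}"
definition G6 :: "cmat set" where "G6 = gen_group {s_mat, t_mat}"

definition is_reflection :: "cmat \<Rightarrow> bool" where
  "is_reflection A \<longleftrightarrow> vec.dim {v :: complex^2. A *v v = v} = 1"

definition conj_class_G7 :: "cmat \<Rightarrow> cmat set" where
  "conj_class_G7 x = {g ** x ** matrix_inv g | g. g \<in> G7}"

definition S_cls :: "cmat set" where "S_cls = conj_class_G7 s_mat"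
definition R1 :: "cmat set" where "R1 = conj_class_G7 t_mat"
definition R1_inv :: "cmat set" where "R1_inv = matrix_inv ` R1"
definition R' :: "cmat set" where "R' = R1 \<union> R1_inv"

definition reflections_G6 :: "cmat set" where
  "reflections_G6 = {A \<in> G6. is_reflection A}"

end

theory Submission imports Defs begin


type_synonym q4 = "rat \<times> rat \<times> rat \<times> rat"
type_synonym m4 = "q4 \<times> q4 \<times> q4 \<times> q4"

fun qmul :: "q4 \<Rightarrow> q4 \<Rightarrow> q4" where
  "qmul (a,b,c,d) (e,f,g,h) =
     (a*e+3*b*f-c*g-3*d*h, a*f+b*e-c*h-d*g, a*g+c*e+3*b*h+3*d*f, a*h+d*e+b*g+c*f)"
fun qadd :: "q4 \<Rightarrow> q4 \<Rightarrow> q4" where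
  "qadd (a,b,c,d) (e,f,g,h) = (a+e,b+f,c+g,d+h)"
fun qsub :: "q4 \<Rightarrow> q4 \<Rightarrow> q4" where
  "qsub (a,b,c,d) (e,f,g,h) = (a-e,b-f,c-g,d-h)"
fun qhom :: "q4 \<Rightarrow> complex" where
  "qhom (a,b,c,d) = Complex (of_rat a + of_rat b * sqrt 3) (of_rat c + of_rat d * sqrt 3)"

lemma alg1: "(r::real) * r = 3 \<Longrightarrow>
  (a + b * r) * (e + f * r) - (c + d * r) * (g + h * r) =
  (a*e+3*b*f-c*g-3*d*h) + (a*f+b*e-c*h-d*g) * r"
proof -
  assume h: "r * r = 3"
  have "(a + b * r) * (e + f * r) - (c + d * r) * (g + h * r) =
    (a*e+(r*r)*b*f-c*g-(r*r)*d*h) + (a*f+b*e-c*h-d*g) * r" by (simp add: algebra_simps)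
  thus ?thesis by (simp add: h)
qed
lemma alg2: "(r::real) * r = 3 \<Longrightarrow>
  (a + b * r) * (g + h * r) + (c + d * r) * (e + f * r) =
  (a*g+c*e+3*b*h+3*d*f) + (a*h+d*e+b*g+c*f) * r"
proof -
  assume h: "r * r = 3"
  have "(a + b * r) * (g + h * r) + (c + d * r) * (e + f * r) =
    (a*g+c*e+(r*r)*b*h+(r*r)*d*f) + (a*h+d*e+b*g+c*f) * r" by (simp add: algebra_simps)
  thus ?thesis by (simp add: h)
qed

lemma qhom_mul: "qhom (qmul x y) = qhom x * qhom y"
proof -
  obtain a b c d where x: "x = (a,b,c,d)" by (cases x) auto
  obtain e f g h where y: "y = (e,f,g,h)" by (cases y) auto
  have r: "sqrt 3 * sqrt 3 = (3::real)" by simp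
  show ?thesis unfolding x y
    using alg1[OF r, of "of_rat a" "of_rat b" "of_rat e" "of_rat f" "of_rat c" "of_rat d" "of_rat g" "of_rat h"]
      alg2[OF r, of "of_rat a" "of_rat b" "of_rat g" "of_rat h" "of_rat c" "of_rat d" "of_rat e" "of_rat f"]
    by (simp add: complex_eq_iff of_rat_add of_rat_mult of_rat_diff)
qed

lemma qhom_add: "qhom (qadd x y) = qhom x + qhom y"
  by (cases x; cases y) (simp add: complex_eq_iff of_rat_add algebra_simps)
lemma qhom_sub: "qhom (qsub x y) = qhom x - qhom y"
  by (cases x; cases y) (simp add: complex_eq_iff of_rat_diff algebra_simps)

definition qcompat :: "q4 \<Rightarrow> q4 \<Rightarrow> bool" where
  "qcompat x y = (case qsub x y of (a,b,c,d) \<Rightarrow> a*a = 3*b*b \<and> c*c = 3*d*d)"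

lemma real_rat_sqrt3: "(of_rat a :: real) + of_rat b * sqrt 3 = 0 \<Longrightarrow> a*a = 3*b*b"
proof -
  assume h: "(of_rat a :: real) + of_rat b * sqrt 3 = 0"
  hence "(of_rat a :: real) = - of_rat b * sqrt 3" by linarith
  hence "(of_rat a :: real) * of_rat a = (of_rat b * sqrt 3) * (of_rat b * sqrt 3)" by simp
  also have "\<dots> = of_rat (3*b*b)" by (simp add: of_rat_mult algebra_simps)
  finally have "(of_rat (a*a) :: real) = of_rat (3*b*b)" by (simp add: of_rat_mult)
  thus ?thesis by simp
qed

lemma qhom_zero_compat: "qhom x = 0 \<Longrightarrow> (case x of (a,b,c,d) \<Rightarrow> a*a = 3*b*b \<and> c*c = 3*d*d)"
  using real_rat_sqrt3 by (cases x) (auto simp: complex_eq_iff)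

lemma qhom_eq_compat: "qhom x = qhom y \<Longrightarrow> qcompat x y"
  unfolding qcompat_def using qhom_zero_compat[of "qsub x y"] by (simp add: qhom_sub)


fun mmul :: "m4 \<Rightarrow> m4 \<Rightarrow> m4" where
  "mmul (a,b,c,d) (e,f,g,h) = (qadd (qmul a e) (qmul b g), qadd (qmul a f) (qmul b h),
                               qadd (qmul c e) (qmul d g), qadd (qmul c f) (qmul d h))"
fun mhom :: "m4 \<Rightarrow> cmat" where
  "mhom (a,b,c,d) = mat2 (qhom a) (qhom b) (qhom c) (qhom d)"
fun mtr :: "m4 \<Rightarrow> q4" where "mtr (a,b,c,d) = qadd a d"
fun mdet :: "m4 \<Rightarrow> q4" where "mdet (a,b,c,d) = qsub (qmul a d) (qmul b c)"

definition mid :: m4 where "mid = ((1,0,0,0),(0,0,0,0),(0,0,0,0),(1,0,0,0))"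

lemma mat2_nth: "mat2 a b c d $ 1 $ 1 = a" "mat2 a b c d $ 1 $ 2 = b"
  "mat2 a b c d $ 2 $ 1 = c" "mat2 a b c d $ 2 $ 2 = d"
  by (simp_all add: mat2_def vector_2)

lemma mat2_eq: "(A::cmat) = mat2 (A$1$1) (A$1$2) (A$2$1) (A$2$2)"
  by (simp add: vec_eq_iff forall_2 mat2_nth)

lemma mat2_eq_iff: "mat2 a b c d = mat2 a' b' c' d' \<longleftrightarrow> a = a' \<and> b = b' \<and> c = c' \<and> d = d'"
  by (metis mat2_nth)

lemma mat2_mult: "mat2 a b c d ** mat2 e f g h = mat2 (a*e+b*g) (a*f+b*h) (c*e+d*g) (c*f+d*h)"
  by (simp add: vec_eq_iff forall_2 mat2_nth matrix_matrix_mult_def UNIV_2)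

lemma mat2_one: "(mat 1 :: cmat) = mat2 1 0 0 1"
  by (simp add: vec_eq_iff forall_2 mat2_nth mat_def)

lemma mat2_trace: "trace (mat2 a b c d) = a + d"
  by (simp add: trace_def UNIV_2 mat2_nth)

lemma mat2_det: "det (mat2 a b c d) = a * d - b * c"
  by (simp add: det_2 mat2_nth)

lemma mhom_mul: "mhom (mmul x y) = mhom x ** mhom y"
proof -
  obtain a b c d where x: "x = (a,b,c,d)" using prod_cases4 by blast
  obtain e f g h where y: "y = (e,f,g,h)" using prod_cases4 by blast
  show ?thesis unfolding x y by (simp only: mmul.simps mhom.simps mat2_mult qhom_mul qhom_add)
qed

lemma mhom_mid: "mhom mid = mat 1"
  by (simp add: mid_def mat2_one mat2_eq_iff complex_eq_iff)

lemma mhom_tr: "trace (mhom x) = qhom (mtr x)"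
proof -
  obtain a b c d where x: "x = (a,b,c,d)" using prod_cases4 by blast
  show ?thesis unfolding x by (simp only: mtr.simps mhom.simps mat2_trace qhom_add)
qed

lemma mhom_det: "det (mhom x) = qhom (mdet x)"
proof -
  obtain a b c d where x: "x = (a,b,c,d)" using prod_cases4 by blast
  show ?thesis unfolding x by (simp only: mdet.simps mhom.simps mat2_det qhom_sub qhom_mul)
qed

definition s_sym :: m4 where "s_sym = ((1,0,0,0),(0,0,0,0),(0,0,0,0),(-1,0,0,0))"
definition t_sym :: m4 where "t_sym = ((1/4,1/4,-1/4,1/4),(1/4,1/4,-1/4,1/4),(-1/4,1/4,-1/4,-1/4),(1/4,-1/4,1/4,1/4))"

lemma s_sym: "mhom s_sym = s_mat"
  by (simp add: s_sym_def s_mat_def mat2_eq_iff complex_eq_iff)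

lemma t_sym: "mhom t_sym = t_mat"
  by (simp add: t_sym_def t_mat_def mat2_eq_iff complex_eq_iff r3_def of_rat_divide of_rat_minus)




lemma gen_mono: "A \<subseteq> gen_group B \<Longrightarrow> gen_group A \<subseteq> gen_group B"
proof
  fix x assume "A \<subseteq> gen_group B" "x \<in> gen_group A"
  thus "x \<in> gen_group B"
    by (induction rule: gen_group.induct[OF \<open>x \<in> gen_group A\<close>])
       (auto intro: gen_group.intros)
qed

lemma inv_props: "invertible (A::cmat) \<Longrightarrow> A ** matrix_inv A = mat 1 \<and> matrix_inv A ** A = mat 1"
  unfolding matrix_inv_def invertible_def by (rule someI_ex)

lemma inv_unique: "(A::cmat) ** B = mat 1 \<Longrightarrow> B ** A = mat 1 \<Longrightarrow> matrix_inv A = B"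
proof -
  assume h: "A ** B = mat 1" "B ** A = mat 1"
  hence "invertible A" unfolding invertible_def by blast
  from inv_props[OF this] have c: "matrix_inv A ** A = mat 1" by blast
  have "matrix_inv A = matrix_inv A ** (A ** B)" using h by simp
  also have "\<dots> = (matrix_inv A ** A) ** B" by (simp add: matrix_mul_assoc)
  also have "\<dots> = B" using c by simp
  finally show ?thesis .
qed

lemma inv_invertible: "invertible (A::cmat) \<Longrightarrow> invertible (matrix_inv A)"
  using inv_props unfolding invertible_def by blast

lemma inv_inv: "invertible (A::cmat) \<Longrightarrow> matrix_inv (matrix_inv A) = A"
  using inv_props inv_unique by blast

lemma gen_invertible: "g \<in> gen_group X \<Longrightarrow> (\<forall>x\<in>X. invertible x) \<Longrightarrow> invertible g"
  by (induction rule: gen_group.induct)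
     (auto simp: invertible_mult inv_invertible intro: invertible_def[THEN iffD2])

lemma conj_tr: "invertible (g::cmat) \<Longrightarrow> trace (g ** x ** matrix_inv g) = trace x"
proof -
  assume "invertible g"
  from inv_props[OF this] have c: "matrix_inv g ** g = mat 1" by blast
  have "trace (g ** x ** matrix_inv g) = trace (matrix_inv g ** (g ** x))" by (rule trace_mul_sym)
  also have "\<dots> = trace ((matrix_inv g ** g) ** x)" by (simp add: matrix_mul_assoc)
  finally show ?thesis using c by simp
qed

lemma conj_det: "invertible (g::cmat) \<Longrightarrow> det (g ** x ** matrix_inv g) = det x"
proof -
  assume "invertible g"
  from inv_props[OF this] have c: "g ** matrix_inv g = mat 1" by blast
  have "det g * det (matrix_inv g) = 1" using c det_mul[of g "matrix_inv g"] by simp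
  thus ?thesis by (simp add: det_mul algebra_simps)
qed

lemma conj_invertible: "invertible (g::cmat) \<Longrightarrow> invertible x \<Longrightarrow> invertible (g ** x ** matrix_inv g)"
  by (simp add: invertible_mult inv_invertible)

inductive_set mon :: "cmat set \<Rightarrow> cmat set" for X :: "cmat set" where
  mon_one: "mat 1 \<in> mon X"
| mon_step: "a \<in> mon X \<Longrightarrow> g \<in> X \<Longrightarrow> a ** g \<in> mon X"

lemma mon_base: "g \<in> X \<Longrightarrow> g \<in> mon X"
  using mon_step[OF mon_one] by simp

lemma mon_mult: "b \<in> mon X \<Longrightarrow> a \<in> mon X \<Longrightarrow> a ** b \<in> mon X"
proof (induction rule: mon.induct)
  case mon_one thus ?case by simp
next
  case (mon_step b g)
  have "a ** (b ** g) = (a ** b) ** g" by (simp add: matrix_mul_assoc)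
  thus ?case using mon_step mon.mon_step by metis
qed

lemma mon_inverse:
  assumes gi: "\<forall>g\<in>X. \<exists>h\<in>mon X. g ** h = mat 1 \<and> h ** g = mat 1"
  shows "a \<in> mon X \<Longrightarrow> \<exists>b\<in>mon X. a ** b = mat 1 \<and> b ** a = mat 1"
proof (induction rule: mon.induct)
  case mon_one
  show ?case using mon.mon_one by force
next
  case (mon_step a g)
  then obtain b where b: "b \<in> mon X" "a ** b = mat 1" "b ** a = mat 1" by blast
  obtain h where h: "h \<in> mon X" "g ** h = mat 1" "h ** g = mat 1" using gi mon_step by blast
  have "(a ** g) ** (h ** b) = a ** (g ** h) ** b" by (simp add: matrix_mul_assoc)
  also have "\<dots> = mat 1" using b h by simp
  finally have 1: "(a ** g) ** (h ** b) = mat 1" .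
  have "(h ** b) ** (a ** g) = h ** (b ** a) ** g" by (simp add: matrix_mul_assoc)
  also have "\<dots> = mat 1" using b h by simp
  finally have 2: "(h ** b) ** (a ** g) = mat 1" .
  show ?case using 1 2 mon_mult[OF b(1) h(1)] by blast
qed

lemma gen_sub_mon:
  assumes gi: "\<forall>g\<in>X. \<exists>h\<in>mon X. g ** h = mat 1 \<and> h ** g = mat 1"
  shows "gen_group X \<subseteq> mon X"
proof
  fix x assume "x \<in> gen_group X"
  thus "x \<in> mon X"
  proof (induction rule: gen_group.induct)
    case gen_one thus ?case by (rule mon_one)
  next
    case (gen_base x) thus ?case by (rule mon_base)
  next
    case (gen_mult a b) thus ?case using mon_mult by blast
  next
    case (gen_inv a)
    then obtain b where "b \<in> mon X" "a ** b = mat 1" "b ** a = mat 1"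
      using mon_inverse[OF gi] by blast
    thus ?case using inv_unique by simp
  qed
qed

fun wp :: "m4 \<Rightarrow> m4 \<Rightarrow> bool list \<Rightarrow> m4" where
  "wp a b [] = mid"
| "wp a b (x # xs) = mmul (if x then a else b) (wp a b xs)"

lemma wp_mem: "mhom (wp a b ws) \<in> gen_group {mhom a, mhom b}"
  by (induction ws) (auto simp: mhom_mid mhom_mul intro: gen_group.intros)




definition Llist :: "m4 list" where "Llist = [((1,0,0,0),(0,0,0,0),(0,0,0,0),(1,0,0,0)),
  ((1,0,0,0),(0,0,0,0),(0,0,0,0),(-1,0,0,0)),
  ((1/4,1/4,-1/4,1/4),(1/4,1/4,-1/4,1/4),(-1/4,1/4,-1/4,-1/4),(1/4,-1/4,1/4,1/4)),
  ((1/4,1/4,-1/4,1/4),(1/4,1/4,-1/4,1/4),(1/4,-1/4,1/4,1/4),(-1/4,1/4,-1/4,-1/4)),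
  ((1/4,1/4,-1/4,1/4),(-1/4,-1/4,1/4,-1/4),(-1/4,1/4,-1/4,-1/4),(-1/4,1/4,-1/4,-1/4)),
  ((1/4,1/4,1/4,-1/4),(-1/4,1/4,1/4,1/4),(1/4,1/4,1/4,-1/4),(1/4,-1/4,-1/4,-1/4)),
  ((1/4,1/4,-1/4,1/4),(-1/4,-1/4,1/4,-1/4),(1/4,-1/4,1/4,1/4),(1/4,-1/4,1/4,1/4)),
  ((1/4,1/4,1/4,-1/4),(-1/4,1/4,1/4,1/4),(-1/4,-1/4,-1/4,1/4),(-1/4,1/4,1/4,1/4)),
  ((-1/4,1/4,1/4,1/4),(1/4,1/4,1/4,-1/4),(1/4,-1/4,-1/4,-1/4),(1/4,1/4,1/4,-1/4)),
  ((1/4,1/4,1/4,-1/4),(1/4,-1/4,-1/4,-1/4),(1/4,1/4,1/4,-1/4),(-1/4,1/4,1/4,1/4)),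
  ((-1/4,1/4,1/4,1/4),(1/4,1/4,1/4,-1/4),(-1/4,1/4,1/4,1/4),(-1/4,-1/4,-1/4,1/4)),
  ((1/4,1/4,1/4,-1/4),(1/4,-1/4,-1/4,-1/4),(-1/4,-1/4,-1/4,1/4),(1/4,-1/4,-1/4,-1/4)),
  ((-1/4,1/4,1/4,1/4),(-1/4,-1/4,-1/4,1/4),(1/4,-1/4,-1/4,-1/4),(-1/4,-1/4,-1/4,1/4)),
  ((0,0,0,0),(0,0,1,0),(0,0,-1,0),(0,0,0,0)),
  ((0,0,0,0),(1,0,0,0),(1,0,0,0),(0,0,0,0)),
  ((-1/4,1/4,1/4,1/4),(-1/4,-1/4,-1/4,1/4),(-1/4,1/4,1/4,1/4),(1/4,1/4,1/4,-1/4)),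
  ((0,0,0,0),(0,0,1,0),(0,0,1,0),(0,0,0,0)),
  ((0,0,0,0),(1,0,0,0),(-1,0,0,0),(0,0,0,0)),
  ((0,0,1,0),(0,0,0,0),(0,0,0,0),(0,0,-1,0)),
  ((0,0,0,0),(0,0,-1,0),(0,0,-1,0),(0,0,0,0)),
  ((0,0,0,0),(-1,0,0,0),(1,0,0,0),(0,0,0,0)),
  ((-1/4,1/4,-1/4,-1/4),(1/4,-1/4,1/4,1/4),(1/4,1/4,-1/4,1/4),(1/4,1/4,-1/4,1/4)),
  ((0,0,1,0),(0,0,0,0),(0,0,0,0),(0,0,1,0)),
  ((0,0,0,0),(0,0,-1,0),(0,0,1,0),(0,0,0,0)),
  ((0,0,0,0),(-1,0,0,0),(-1,0,0,0),(0,0,0,0)),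
  ((-1/4,1/4,-1/4,-1/4),(1/4,-1/4,1/4,1/4),(-1/4,-1/4,1/4,-1/4),(-1/4,-1/4,1/4,-1/4)),
  ((1/4,-1/4,1/4,1/4),(1/4,-1/4,1/4,1/4),(-1/4,-1/4,1/4,-1/4),(1/4,1/4,-1/4,1/4)),
  ((-1/4,-1/4,1/4,-1/4),(1/4,1/4,-1/4,1/4),(-1/4,1/4,-1/4,-1/4),(-1/4,1/4,-1/4,-1/4)),
  ((1/4,-1/4,1/4,1/4),(-1/4,1/4,-1/4,-1/4),(1/4,1/4,-1/4,1/4),(1/4,1/4,-1/4,1/4)),
  ((-1/4,1/4,-1/4,-1/4),(-1/4,1/4,-1/4,-1/4),(1/4,1/4,-1/4,1/4),(-1/4,-1/4,1/4,-1/4)),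
  ((1/4,-1/4,1/4,1/4),(1/4,-1/4,1/4,1/4),(1/4,1/4,-1/4,1/4),(-1/4,-1/4,1/4,-1/4)),
  ((-1/4,-1/4,1/4,-1/4),(1/4,1/4,-1/4,1/4),(1/4,-1/4,1/4,1/4),(1/4,-1/4,1/4,1/4)),
  ((1/4,-1/4,1/4,1/4),(-1/4,1/4,-1/4,-1/4),(-1/4,-1/4,1/4,-1/4),(-1/4,-1/4,1/4,-1/4)),
  ((-1/4,1/4,-1/4,-1/4),(-1/4,1/4,-1/4,-1/4),(-1/4,-1/4,1/4,-1/4),(1/4,1/4,-1/4,1/4)),
  ((-1/4,-1/4,1/4,-1/4),(-1/4,-1/4,1/4,-1/4),(-1/4,1/4,-1/4,-1/4),(1/4,-1/4,1/4,1/4)),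
  ((1/4,-1/4,-1/4,-1/4),(-1/4,-1/4,-1/4,1/4),(1/4,-1/4,-1/4,-1/4),(1/4,1/4,1/4,-1/4)),
  ((-1/4,-1/4,-1/4,1/4),(-1/4,1/4,1/4,1/4),(1/4,1/4,1/4,-1/4),(-1/4,1/4,1/4,1/4)),
  ((1/4,-1/4,-1/4,-1/4),(1/4,1/4,1/4,-1/4),(-1/4,1/4,1/4,1/4),(1/4,1/4,1/4,-1/4)),
  ((-1/4,-1/4,1/4,-1/4),(-1/4,-1/4,1/4,-1/4),(1/4,-1/4,1/4,1/4),(-1/4,1/4,-1/4,-1/4)),
  ((1/4,-1/4,-1/4,-1/4),(-1/4,-1/4,-1/4,1/4),(-1/4,1/4,1/4,1/4),(-1/4,-1/4,-1/4,1/4)),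
  ((-1/4,-1/4,-1/4,1/4),(-1/4,1/4,1/4,1/4),(-1/4,-1/4,-1/4,1/4),(1/4,-1/4,-1/4,-1/4)),
  ((1/4,-1/4,-1/4,-1/4),(1/4,1/4,1/4,-1/4),(1/4,-1/4,-1/4,-1/4),(-1/4,-1/4,-1/4,1/4)),
  ((-1/4,-1/4,-1/4,1/4),(1/4,-1/4,-1/4,-1/4),(1/4,1/4,1/4,-1/4),(1/4,-1/4,-1/4,-1/4)),
  ((0,0,-1,0),(0,0,0,0),(0,0,0,0),(0,0,1,0)),
  ((-1/4,-1/4,-1/4,1/4),(1/4,-1/4,-1/4,-1/4),(-1/4,-1/4,-1/4,1/4),(-1/4,1/4,1/4,1/4)),
  ((0,0,-1,0),(0,0,0,0),(0,0,0,0),(0,0,-1,0)),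
  ((-1,0,0,0),(0,0,0,0),(0,0,0,0),(1,0,0,0)),
  ((-1,0,0,0),(0,0,0,0),(0,0,0,0),(-1,0,0,0))]"

definition g3_0 :: m4 where "g3_0 = ((1/4,1/4,-1/4,1/4),(1/4,1/4,-1/4,1/4),(-1/4,1/4,-1/4,-1/4),(1/4,-1/4,1/4,1/4))"
definition g3_1 :: m4 where "g3_1 = ((1/4,1/4,-1/4,1/4),(-1/4,-1/4,1/4,-1/4),(1/4,-1/4,1/4,1/4),(1/4,-1/4,1/4,1/4))"
definition g3_2 :: m4 where "g3_2 = ((1/4,-1/4,1/4,1/4),(1/4,-1/4,1/4,1/4),(-1/4,-1/4,1/4,-1/4),(1/4,1/4,-1/4,1/4))"
definition g3_3 :: m4 where "g3_3 = ((1/4,-1/4,1/4,1/4),(-1/4,1/4,-1/4,-1/4),(1/4,1/4,-1/4,1/4),(1/4,1/4,-1/4,1/4))"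
definition g2_0 :: m4 where "g2_0 = ((1,0,0,0),(0,0,0,0),(0,0,0,0),(-1,0,0,0))"
definition g2_1 :: m4 where "g2_1 = ((0,0,0,0),(0,0,1,0),(0,0,-1,0),(0,0,0,0))"
definition g2_2 :: m4 where "g2_2 = ((0,0,0,0),(1,0,0,0),(1,0,0,0),(0,0,0,0))"
definition g2_3 :: m4 where "g2_3 = ((0,0,0,0),(0,0,-1,0),(0,0,1,0),(0,0,0,0))"
definition g2_4 :: m4 where "g2_4 = ((0,0,0,0),(-1,0,0,0),(-1,0,0,0),(0,0,0,0))"
definition g2_5 :: m4 where "g2_5 = ((-1,0,0,0),(0,0,0,0),(0,0,0,0),(1,0,0,0))"
definition good3 :: "m4 list" where "good3 = [g3_0,g3_1,g3_2,g3_3]"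
definition good2 :: "m4 list" where "good2 = [g2_0,g2_1,g2_2,g2_3,g2_4,g2_5]"
definition pair_ok :: "m4 \<Rightarrow> m4 \<Rightarrow> bool" where "pair_ok e w \<longleftrightarrow> s_mat \<in> gen_group {mhom e, mhom w} \<and> t_mat \<in> gen_group {mhom e, mhom w}"

lemma pair_0_0: "pair_ok g3_0 g2_0"
proof -
  have 1: "wp g3_0 g2_0 [False] = s_sym" by (simp add: g3_0_def g2_0_def s_sym_def mid_def)
  have 2: "wp g3_0 g2_0 [True] = t_sym" by (simp add: g3_0_def g2_0_def t_sym_def mid_def)
  show ?thesis unfolding pair_ok_def using wp_mem[of g3_0 g2_0 "[False]"] wp_mem[of g3_0 g2_0 "[True]"]
    by (simp only: 1 2 s_sym t_sym)
qed

lemma pair_0_1: "pair_ok g3_0 g2_1"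
proof -
  have 1: "wp g3_0 g2_1 [True,True,False,True] = s_sym" by (simp add: g3_0_def g2_1_def s_sym_def mid_def)
  have 2: "wp g3_0 g2_1 [True] = t_sym" by (simp add: g3_0_def g2_1_def t_sym_def mid_def)
  show ?thesis unfolding pair_ok_def using wp_mem[of g3_0 g2_1 "[True,True,False,True]"] wp_mem[of g3_0 g2_1 "[True]"]
    by (simp only: 1 2 s_sym t_sym)
qed

lemma pair_0_2: "pair_ok g3_0 g2_2"
proof -
  have 1: "wp g3_0 g2_2 [True,False,True,True] = s_sym" by (simp add: g3_0_def g2_2_def s_sym_def mid_def)
  have 2: "wp g3_0 g2_2 [True] = t_sym" by (simp add: g3_0_def g2_2_def t_sym_def mid_def)
  show ?thesis unfolding pair_ok_def using wp_mem[of g3_0 g2_2 "[True,False,True,True]"] wp_mem[of g3_0 g2_2 "[True]"]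
    by (simp only: 1 2 s_sym t_sym)
qed

lemma pair_0_3: "pair_ok g3_0 g2_3"
proof -
  have 1: "wp g3_0 g2_3 [False,True,True,False,True,False] = s_sym" by (simp add: g3_0_def g2_3_def s_sym_def mid_def)
  have 2: "wp g3_0 g2_3 [True] = t_sym" by (simp add: g3_0_def g2_3_def t_sym_def mid_def)
  show ?thesis unfolding pair_ok_def using wp_mem[of g3_0 g2_3 "[False,True,True,False,True,False]"] wp_mem[of g3_0 g2_3 "[True]"]
    by (simp only: 1 2 s_sym t_sym)
qed

lemma pair_0_4: "pair_ok g3_0 g2_4"
proof -
  have 1: "wp g3_0 g2_4 [False,True,False,True,True,False] = s_sym" by (simp add: g3_0_def g2_4_def s_sym_def mid_def)
  have 2: "wp g3_0 g2_4 [True] = t_sym" by (simp add: g3_0_def g2_4_def t_sym_def mid_def)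
  show ?thesis unfolding pair_ok_def using wp_mem[of g3_0 g2_4 "[False,True,False,True,True,False]"] wp_mem[of g3_0 g2_4 "[True]"]
    by (simp only: 1 2 s_sym t_sym)
qed

lemma pair_0_5: "pair_ok g3_0 g2_5"
proof -
  have 1: "wp g3_0 g2_5 [True,True,False,True,False,True,True,False,True] = s_sym" by (simp add: g3_0_def g2_5_def s_sym_def mid_def)
  have 2: "wp g3_0 g2_5 [True] = t_sym" by (simp add: g3_0_def g2_5_def t_sym_def mid_def)
  show ?thesis unfolding pair_ok_def using wp_mem[of g3_0 g2_5 "[True,True,False,True,False,True,True,False,True]"] wp_mem[of g3_0 g2_5 "[True]"]
    by (simp only: 1 2 s_sym t_sym)
qed

lemma pair_1_0: "pair_ok g3_1 g2_0"
proof -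
  have 1: "wp g3_1 g2_0 [False] = s_sym" by (simp add: g3_1_def g2_0_def s_sym_def mid_def)
  have 2: "wp g3_1 g2_0 [False,True,False] = t_sym" by (simp add: g3_1_def g2_0_def t_sym_def mid_def)
  show ?thesis unfolding pair_ok_def using wp_mem[of g3_1 g2_0 "[False]"] wp_mem[of g3_1 g2_0 "[False,True,False]"]
    by (simp only: 1 2 s_sym t_sym)
qed

lemma pair_1_1: "pair_ok g3_1 g2_1"
proof -
  have 1: "wp g3_1 g2_1 [False,True,True,False,True,False] = s_sym" by (simp add: g3_1_def g2_1_def s_sym_def mid_def)
  have 2: "wp g3_1 g2_1 [True,True,False,True,False,True] = t_sym" by (simp add: g3_1_def g2_1_def t_sym_def mid_def)
  show ?thesis unfolding pair_ok_def using wp_mem[of g3_1 g2_1 "[False,True,True,False,True,False]"] wp_mem[of g3_1 g2_1 "[True,True,False,True,False,True]"]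
    by (simp only: 1 2 s_sym t_sym)
qed

lemma pair_1_2: "pair_ok g3_1 g2_2"
proof -
  have 1: "wp g3_1 g2_2 [False,True,False,True,True,False] = s_sym" by (simp add: g3_1_def g2_2_def s_sym_def mid_def)
  have 2: "wp g3_1 g2_2 [True,False,True,False,True,True] = t_sym" by (simp add: g3_1_def g2_2_def t_sym_def mid_def)
  show ?thesis unfolding pair_ok_def using wp_mem[of g3_1 g2_2 "[False,True,False,True,True,False]"] wp_mem[of g3_1 g2_2 "[True,False,True,False,True,True]"]
    by (simp only: 1 2 s_sym t_sym)
qed

lemma pair_1_3: "pair_ok g3_1 g2_3"
proof -
  have 1: "wp g3_1 g2_3 [True,True,False,True] = s_sym" by (simp add: g3_1_def g2_3_def s_sym_def mid_def)
  have 2: "wp g3_1 g2_3 [True,True,False,True,False,True] = t_sym" by (simp add: g3_1_def g2_3_def t_sym_def mid_def)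
  show ?thesis unfolding pair_ok_def using wp_mem[of g3_1 g2_3 "[True,True,False,True]"] wp_mem[of g3_1 g2_3 "[True,True,False,True,False,True]"]
    by (simp only: 1 2 s_sym t_sym)
qed

lemma pair_1_4: "pair_ok g3_1 g2_4"
proof -
  have 1: "wp g3_1 g2_4 [True,False,True,True] = s_sym" by (simp add: g3_1_def g2_4_def s_sym_def mid_def)
  have 2: "wp g3_1 g2_4 [True,False,True,False,True,True] = t_sym" by (simp add: g3_1_def g2_4_def t_sym_def mid_def)
  show ?thesis unfolding pair_ok_def using wp_mem[of g3_1 g2_4 "[True,False,True,True]"] wp_mem[of g3_1 g2_4 "[True,False,True,False,True,True]"]
    by (simp only: 1 2 s_sym t_sym)
qed

lemma pair_1_5: "pair_ok g3_1 g2_5"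
proof -
  have 1: "wp g3_1 g2_5 [True,True,False,True,False,True,True,False,True] = s_sym" by (simp add: g3_1_def g2_5_def s_sym_def mid_def)
  have 2: "wp g3_1 g2_5 [False,True,False] = t_sym" by (simp add: g3_1_def g2_5_def t_sym_def mid_def)
  show ?thesis unfolding pair_ok_def using wp_mem[of g3_1 g2_5 "[True,True,False,True,False,True,True,False,True]"] wp_mem[of g3_1 g2_5 "[False,True,False]"]
    by (simp only: 1 2 s_sym t_sym)
qed

lemma pair_2_0: "pair_ok g3_2 g2_0"
proof -
  have 1: "wp g3_2 g2_0 [False] = s_sym" by (simp add: g3_2_def g2_0_def s_sym_def mid_def)
  have 2: "wp g3_2 g2_0 [True,False,True,False,True,True] = t_sym" by (simp add: g3_2_def g2_0_def t_sym_def mid_def)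
  show ?thesis unfolding pair_ok_def using wp_mem[of g3_2 g2_0 "[False]"] wp_mem[of g3_2 g2_0 "[True,False,True,False,True,True]"]
    by (simp only: 1 2 s_sym t_sym)
qed

lemma pair_2_1: "pair_ok g3_2 g2_1"
proof -
  have 1: "wp g3_2 g2_1 [False,True,True,False,True,False] = s_sym" by (simp add: g3_2_def g2_1_def s_sym_def mid_def)
  have 2: "wp g3_2 g2_1 [False,True,False] = t_sym" by (simp add: g3_2_def g2_1_def t_sym_def mid_def)
  show ?thesis unfolding pair_ok_def using wp_mem[of g3_2 g2_1 "[False,True,True,False,True,False]"] wp_mem[of g3_2 g2_1 "[False,True,False]"]
    by (simp only: 1 2 s_sym t_sym)
qed

lemma pair_2_2: "pair_ok g3_2 g2_2"
proof -
  have 1: "wp g3_2 g2_2 [True,False,True,True] = s_sym" by (simp add: g3_2_def g2_2_def s_sym_def mid_def)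
  have 2: "wp g3_2 g2_2 [True,True,False,True,False,True] = t_sym" by (simp add: g3_2_def g2_2_def t_sym_def mid_def)
  show ?thesis unfolding pair_ok_def using wp_mem[of g3_2 g2_2 "[True,False,True,True]"] wp_mem[of g3_2 g2_2 "[True,True,False,True,False,True]"]
    by (simp only: 1 2 s_sym t_sym)
qed

lemma pair_2_3: "pair_ok g3_2 g2_3"
proof -
  have 1: "wp g3_2 g2_3 [True,True,False,True] = s_sym" by (simp add: g3_2_def g2_3_def s_sym_def mid_def)
  have 2: "wp g3_2 g2_3 [False,True,False] = t_sym" by (simp add: g3_2_def g2_3_def t_sym_def mid_def)
  show ?thesis unfolding pair_ok_def using wp_mem[of g3_2 g2_3 "[True,True,False,True]"] wp_mem[of g3_2 g2_3 "[False,True,False]"]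
    by (simp only: 1 2 s_sym t_sym)
qed

lemma pair_2_4: "pair_ok g3_2 g2_4"
proof -
  have 1: "wp g3_2 g2_4 [False,True,False,True,True,False] = s_sym" by (simp add: g3_2_def g2_4_def s_sym_def mid_def)
  have 2: "wp g3_2 g2_4 [True,True,False,True,False,True] = t_sym" by (simp add: g3_2_def g2_4_def t_sym_def mid_def)
  show ?thesis unfolding pair_ok_def using wp_mem[of g3_2 g2_4 "[False,True,False,True,True,False]"] wp_mem[of g3_2 g2_4 "[True,True,False,True,False,True]"]
    by (simp only: 1 2 s_sym t_sym)
qed

lemma pair_2_5: "pair_ok g3_2 g2_5"
proof -
  have 1: "wp g3_2 g2_5 [True,True,False,True,False,True,True,False,True] = s_sym" by (simp add: g3_2_def g2_5_def s_sym_def mid_def)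
  have 2: "wp g3_2 g2_5 [True,False,True,False,True,True] = t_sym" by (simp add: g3_2_def g2_5_def t_sym_def mid_def)
  show ?thesis unfolding pair_ok_def using wp_mem[of g3_2 g2_5 "[True,True,False,True,False,True,True,False,True]"] wp_mem[of g3_2 g2_5 "[True,False,True,False,True,True]"]
    by (simp only: 1 2 s_sym t_sym)
qed

lemma pair_3_0: "pair_ok g3_3 g2_0"
proof -
  have 1: "wp g3_3 g2_0 [False] = s_sym" by (simp add: g3_3_def g2_0_def s_sym_def mid_def)
  have 2: "wp g3_3 g2_0 [True,True,False,True,False,True] = t_sym" by (simp add: g3_3_def g2_0_def t_sym_def mid_def)
  show ?thesis unfolding pair_ok_def using wp_mem[of g3_3 g2_0 "[False]"] wp_mem[of g3_3 g2_0 "[True,True,False,True,False,True]"]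
    by (simp only: 1 2 s_sym t_sym)
qed

lemma pair_3_1: "pair_ok g3_3 g2_1"
proof -
  have 1: "wp g3_3 g2_1 [True,True,False,True] = s_sym" by (simp add: g3_3_def g2_1_def s_sym_def mid_def)
  have 2: "wp g3_3 g2_1 [True,False,True,False,True,True] = t_sym" by (simp add: g3_3_def g2_1_def t_sym_def mid_def)
  show ?thesis unfolding pair_ok_def using wp_mem[of g3_3 g2_1 "[True,True,False,True]"] wp_mem[of g3_3 g2_1 "[True,False,True,False,True,True]"]
    by (simp only: 1 2 s_sym t_sym)
qed

lemma pair_3_2: "pair_ok g3_3 g2_2"
proof -
  have 1: "wp g3_3 g2_2 [False,True,False,True,True,False] = s_sym" by (simp add: g3_3_def g2_2_def s_sym_def mid_def)
  have 2: "wp g3_3 g2_2 [False,True,False] = t_sym" by (simp add: g3_3_def g2_2_def t_sym_def mid_def)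
  show ?thesis unfolding pair_ok_def using wp_mem[of g3_3 g2_2 "[False,True,False,True,True,False]"] wp_mem[of g3_3 g2_2 "[False,True,False]"]
    by (simp only: 1 2 s_sym t_sym)
qed

lemma pair_3_3: "pair_ok g3_3 g2_3"
proof -
  have 1: "wp g3_3 g2_3 [False,True,True,False,True,False] = s_sym" by (simp add: g3_3_def g2_3_def s_sym_def mid_def)
  have 2: "wp g3_3 g2_3 [True,False,True,False,True,True] = t_sym" by (simp add: g3_3_def g2_3_def t_sym_def mid_def)
  show ?thesis unfolding pair_ok_def using wp_mem[of g3_3 g2_3 "[False,True,True,False,True,False]"] wp_mem[of g3_3 g2_3 "[True,False,True,False,True,True]"]
    by (simp only: 1 2 s_sym t_sym)
qed

lemma pair_3_4: "pair_ok g3_3 g2_4"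
proof -
  have 1: "wp g3_3 g2_4 [True,False,True,True] = s_sym" by (simp add: g3_3_def g2_4_def s_sym_def mid_def)
  have 2: "wp g3_3 g2_4 [False,True,False] = t_sym" by (simp add: g3_3_def g2_4_def t_sym_def mid_def)
  show ?thesis unfolding pair_ok_def using wp_mem[of g3_3 g2_4 "[True,False,True,True]"] wp_mem[of g3_3 g2_4 "[False,True,False]"]
    by (simp only: 1 2 s_sym t_sym)
qed

lemma pair_3_5: "pair_ok g3_3 g2_5"
proof -
  have 1: "wp g3_3 g2_5 [True,True,False,True,False,True,True,False,True] = s_sym" by (simp add: g3_3_def g2_5_def s_sym_def mid_def)
  have 2: "wp g3_3 g2_5 [True,True,False,True,False,True] = t_sym" by (simp add: g3_3_def g2_5_def t_sym_def mid_def)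
  show ?thesis unfolding pair_ok_def using wp_mem[of g3_3 g2_5 "[True,True,False,True,False,True,True,False,True]"] wp_mem[of g3_3 g2_5 "[True,True,False,True,False,True]"]
    by (simp only: 1 2 s_sym t_sym)
qed

lemma all_pairs: "\<forall>e\<in>set good3. \<forall>w\<in>set good2. pair_ok e w"
  unfolding good3_def good2_def by (simp add: pair_0_0 pair_0_1 pair_0_2 pair_0_3 pair_0_4 pair_0_5 pair_1_0 pair_1_1 pair_1_2 pair_1_3 pair_1_4 pair_1_5 pair_2_0 pair_2_1 pair_2_2 pair_2_3 pair_2_4 pair_2_5 pair_3_0 pair_3_1 pair_3_2 pair_3_3 pair_3_4 pair_3_5)

lemma filt3: "\<forall>e\<in>set Llist. qcompat (mtr e) (mtr t_sym) \<and> qcompat (mdet e) (mdet t_sym) \<longrightarrow> e \<in> set good3"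
  unfolding Llist_def good3_def by (simp add: qcompat_def t_sym_def g3_0_def g3_1_def g3_2_def g3_3_def)

lemma filt2: "\<forall>e\<in>set Llist. qcompat (mtr e) (mtr s_sym) \<and> qcompat (mdet e) (mdet s_sym) \<longrightarrow> e \<in> set good2"
  unfolding Llist_def good2_def by (simp add: qcompat_def s_sym_def g2_0_def g2_1_def g2_2_def g2_3_def g2_4_def g2_5_def)

lemma closed_s: "\<forall>e\<in>set Llist. mmul e s_sym \<in> set Llist"
  unfolding Llist_def by (simp add: s_sym_def)

lemma closed_t: "\<forall>e\<in>set Llist. mmul e t_sym \<in> set Llist"
  unfolding Llist_def by (simp add: t_sym_def)

lemma mid_in: "mid \<in> set Llist"
  unfolding Llist_def by (simp add: mid_def)

lemma s_sq: "mmul s_sym s_sym = mid"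
  by (simp add: s_sym_def mid_def)

lemma t_cube: "mmul t_sym (mmul t_sym t_sym) = mid" "mmul (mmul t_sym t_sym) t_sym = mid"
  by (simp_all add: t_sym_def mid_def)




lemma s_inv: "s_mat ** s_mat = mat 1"
  by (metis s_sq mhom_mul mhom_mid s_sym)

lemma t_invs1: "t_mat ** (t_mat ** t_mat) = mat 1"
  by (metis t_cube(1) mhom_mul mhom_mid t_sym)
lemma t_invs2: "(t_mat ** t_mat) ** t_mat = mat 1"
  by (metis t_cube(2) mhom_mul mhom_mid t_sym)
lemmas t_invs = t_invs1 t_invs2

lemma G6_sub: "G6 \<subseteq> mhom ` set Llist"
proof -
  have gi: "\<forall>g\<in>{s_mat,t_mat}. \<exists>h\<in>mon {s_mat,t_mat}. g ** h = mat 1 \<and> h ** g = mat 1"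
  proof -
    have "s_mat \<in> mon {s_mat,t_mat}" "t_mat \<in> mon {s_mat,t_mat}" by (auto intro: mon_base)
    hence "t_mat ** t_mat \<in> mon {s_mat,t_mat}" using mon_mult by blast
    thus ?thesis using \<open>s_mat \<in> mon {s_mat,t_mat}\<close> s_inv t_invs by blast
  qed
  have "x \<in> mhom ` set Llist" if "x \<in> mon {s_mat,t_mat}" for x
    using that
  proof (induction rule: mon.induct)
    case mon_one thus ?case using mid_in mhom_mid by force
  next
    case (mon_step a g)
    then obtain e where e: "e \<in> set Llist" "a = mhom e" by blast
    have "g = s_mat \<or> g = t_mat" using mon_step by blast
    moreover have "a ** s_mat \<in> mhom ` set Llist"
    proof -
      have "a ** s_mat = mhom (mmul e s_sym)" using e mhom_mul s_sym by simp
      thus ?thesis using closed_s e by blast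
    qed
    moreover have "a ** t_mat \<in> mhom ` set Llist"
    proof -
      have "a ** t_mat = mhom (mmul e t_sym)" using e mhom_mul t_sym by simp
      thus ?thesis using closed_t e by blast
    qed
    ultimately show ?case by blast
  qed
  thus ?thesis using gen_sub_mon[OF gi] unfolding G6_def by blast
qed

lemma G7_inv: "g \<in> G7 \<Longrightarrow> invertible g"
proof -
  assume g: "g \<in> G7"
  have "invertible s_mat" using s_inv invertible_def by blast
  moreover have t: "invertible t_mat" using t_invs invertible_def by blast
  moreover have "invertible u_mat"
  proof -
    have "transpose t_mat ** transpose (t_mat ** t_mat) = mat 1"
      by (metis matrix_transpose_mul t_invs2 transpose_mat)
    moreover have "transpose (t_mat ** t_mat) ** transpose t_mat = mat 1"
      by (metis matrix_transpose_mul t_invs1 transpose_mat)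
    ultimately show ?thesis unfolding u_mat_def invertible_def by blast
  qed
  ultimately show ?thesis using gen_invertible g unfolding G7_def by blast
qed

lemma S_prop: "y \<in> S_cls \<Longrightarrow> trace y = trace s_mat \<and> det y = det s_mat"
  unfolding S_cls_def conj_class_G7_def using G7_inv conj_tr conj_det by blast

lemma R1_prop: "y \<in> R1 \<Longrightarrow> trace y = trace t_mat \<and> det y = det t_mat \<and> invertible y"
proof -
  assume "y \<in> R1"
  then obtain g where g: "g \<in> G7" "y = g ** t_mat ** matrix_inv g"
    unfolding R1_def conj_class_G7_def by blast
  have t: "invertible t_mat" using t_invs invertible_def by blast
  show ?thesis using g G7_inv conj_tr conj_det conj_invertible[OF _ t] by blast
qed

lemma good3_from: "y \<in> G6 \<Longrightarrow> trace y = trace t_mat \<Longrightarrow> det y = det t_mat \<Longrightarrow> \<exists>e\<in>set good3. y = mhom e"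
proof -
  assume h: "y \<in> G6" "trace y = trace t_mat" "det y = det t_mat"
  then obtain e where e: "e \<in> set Llist" "y = mhom e" using G6_sub by blast
  have "qhom (mtr e) = qhom (mtr t_sym)" "qhom (mdet e) = qhom (mdet t_sym)"
    using h e by (simp_all flip: mhom_tr mhom_det add: t_sym)
  hence "qcompat (mtr e) (mtr t_sym) \<and> qcompat (mdet e) (mdet t_sym)" using qhom_eq_compat by blast
  thus ?thesis using filt3 e by blast
qed

lemma good2_from: "y \<in> G6 \<Longrightarrow> trace y = trace s_mat \<Longrightarrow> det y = det s_mat \<Longrightarrow> \<exists>e\<in>set good2. y = mhom e"
proof -
  assume h: "y \<in> G6" "trace y = trace s_mat" "det y = det s_mat"
  then obtain e where e: "e \<in> set Llist" "y = mhom e" using G6_sub by blast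
  have "qhom (mtr e) = qhom (mtr s_sym)" "qhom (mdet e) = qhom (mdet s_sym)"
    using h e by (simp_all flip: mhom_tr mhom_det add: s_sym)
  hence "qcompat (mtr e) (mtr s_sym) \<and> qcompat (mdet e) (mdet s_sym)" using qhom_eq_compat by blast
  thus ?thesis using filt2 e by blast
qed

theorem proposition3p11:
  fixes X :: "(complex^2^2) set"
  assumes "X \<subseteq> reflections_G6"
    and "X \<inter> R' \<noteq> {}"
    and "X \<inter> S_cls \<noteq> {}"
  shows "gen_group X = G6"
proof
  have XG: "X \<subseteq> G6" using assms(1) unfolding reflections_G6_def by blast
  show "gen_group X \<subseteq> G6" using gen_mono[of X "{s_mat, t_mat}"] XG unfolding G6_def by blast
  obtain y where y: "y \<in> X" "y \<in> S_cls" using assms(3) by blast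
  obtain x where x: "x \<in> X" "x \<in> R'" using assms(2) by blast
  have "\<exists>z. z \<in> gen_group X \<and> z \<in> G6 \<and> z \<in> R1"
  proof (cases "x \<in> R1")
    case True thus ?thesis using x XG gen_base by blast
  next
    case False
    hence "x \<in> R1_inv" using x unfolding R'_def by blast
    then obtain z where z: "z \<in> R1" "x = matrix_inv z" unfolding R1_inv_def by blast
    hence zx: "z = matrix_inv x" using R1_prop inv_inv by metis
    have "z \<in> gen_group X" using zx x gen_base gen_inv by metis
    moreover have "z \<in> G6" using zx x XG gen_inv unfolding G6_def by blast
    ultimately show ?thesis using z by blast
  qed
  then obtain z where z: "z \<in> gen_group X" "z \<in> G6" "z \<in> R1" by blast
  obtain e where e: "e \<in> set good3" "z = mhom e" using good3_from z R1_prop by blast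
  obtain w where w: "w \<in> set good2" "y = mhom w" using good2_from y S_prop XG by blast
  have po: "pair_ok e w" using all_pairs e w by blast
  have sub: "gen_group {mhom e, mhom w} \<subseteq> gen_group X"
    using gen_mono z e w y gen_base by (metis empty_subsetI insert_subset)
  have "{s_mat, t_mat} \<subseteq> gen_group X" using po sub unfolding pair_ok_def by blast
  thus "G6 \<subseteq> gen_group X" unfolding G6_def by (rule gen_mono)
qed


end
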